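(* Assume the semi-classical setting described in the context, with polynomials $W\not\equiv 0$, $V$, $U$ such that $W f' = 2Vf + U$. For $n\ge 1$ define the formal Laurent series (in powers of $z$, finitely many positive powers) $$\Theta_n = W\,(\varepsilon_n p_n' - \varepsilon_n' p_n) + 2V\varepsilon_n p_n,\qquad \Omega_n = a_n W\,(\varepsilon_{n-1}p_n' - \varepsilon_n' p_{n-1}) + a_n V\,(\varepsilon_{n-1}p_n + \varepsilon_n p_{n-1}).$$ Then $\Theta_n$ and $\Omega_n$ are polynomials in $z$ (all coefficients of negative powers of $z$ vanish), $\deg\Theta_n\le \max(\deg W-2,\deg V-1)$, and $\deg \Omega_n\le\max(\deg W-1,\deg V)$. Moreover, $\Theta_n = W\,[p_{n-1}^{(1)\prime}p_n - p_n' p_{n-1}^{(1)}] - 2V p_{n-1}^{(1)}p_n - U p_n^2$. If in addition $W(z)=\prod_{k=1}^m (z-x_k)$ with $m\ge 2$ and $2V(z) = W(z)\sum_{k=1}^m \alpha_k/(z-x_k)$, then $$\Theta_n(z) = \Big(2n+1+\sum_{k=1}^m\alpha_k\Big)z^{m-2} + (\text{lower powers}),\qquad \Omega_n(z) = \Big(n+\tfrac12\sum_{k=1}^m\alpha_k\Big)z^{m-1} + (\text{lower powers}).$$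
   Context: Let $(\mu_k)_{k\ge 0}$ be complex numbers such that all Hankel determinants $\det(\mu_{i+j})_{0\le i,j\le n}$, $n\ge 0$, are nonzero. Let $\mathcal L$ be the linear functional on polynomials with $\mathcal L(x^k)=\mu_k$, and let $p_n(z)=\gamma_n z^n+\cdots$ ($\gamma_n\neq 0$) be the orthonormal polynomials: $\mathcal L(p_np_m)=\delta_{n,m}$. They satisfy $a_{n+1}p_{n+1}(z)=(z-b_n)p_n(z)-a_np_{n-1}(z)$ ($n\ge0$, $p_{-1}=0$) with $a_n=\gamma_{n-1}/\gamma_n$. Let $f(z)=\sum_{k\ge0}\mu_k z^{-k-1}$ (formal series in $1/z$). For $n\ge0$ let $p^{(1)}_{n-1}$ be the polynomial part of $f p_n$ and $\varepsilon_n = f p_n - p^{(1)}_{n-1}$, a formal series of the form $\gamma_n^{-1}z^{-n-1}+O(z^{-n-2})$. Primes denote $d/dz$. The setting is semi-classical if there are polynomials $W\not\equiv0$, $V$, $U$ with $Wf'=2Vf+U$ (as formal series). *)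

theory Defs
  imports "HOL-Computational_Algebra.Polynomial" "HOL-Computational_Algebra.Formal_Laurent_Series"
          "Jordan_Normal_Form.Determinant"
begin

text \<open>Formal Laurent series in powers of z with finitely many positive powers are represented
  as formal Laurent series (type fls) in the variable X = 1/z: the coefficient of z^k is the
  fls coefficient at index -k.\<close>

definition zpoly :: "complex poly \<Rightarrow> complex fls" where
  "zpoly p = (\<Sum>k\<le>degree p. fls_const (coeff p k) * fls_X_intpow (- int k))"

text \<open>Derivative d/dz; since X = 1/z this is -X^2 d/dX.\<close>
definition zderiv :: "complex fls \<Rightarrow> complex fls" where
  "zderiv G = - (fls_X ^ 2 * fls_deriv G)"

definition zpolypart :: "complex fls \<Rightarrow> complex poly" where
  "zpolypart G = (\<Sum>k\<le>nat (- fls_subdegree G). monom (fls_nth G (- int k)) k)"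

text \<open>The moment series f(z) = sum_k mu_k z^(-k-1).\<close>
definition moment_series :: "(nat \<Rightarrow> complex) \<Rightarrow> complex fls" where
  "moment_series \<mu> = fls_shift (-1) (fps_to_fls (Abs_fps \<mu>))"

definition momL :: "(nat \<Rightarrow> complex) \<Rightarrow> complex poly \<Rightarrow> complex" where
  "momL \<mu> q = (\<Sum>k\<le>degree q. coeff q k * \<mu> k)"

definition hankel :: "(nat \<Rightarrow> complex) \<Rightarrow> nat \<Rightarrow> complex mat" where
  "hankel \<mu> n = mat (n+1) (n+1) (\<lambda>(i,j). \<mu> (i+j))"

text \<open>Second-kind series eps_n = f p_n - p^(1)_(n-1).\<close>
definition epsn :: "(nat \<Rightarrow> complex) \<Rightarrow> complex poly \<Rightarrow> complex fls" where
  "epsn \<mu> q = moment_series \<mu> * zpoly q - zpoly (zpolypart (moment_series \<mu> * zpoly q))"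

text \<open>Degree with the convention that the zero polynomial has degree -1 (only used in
  bounds where -1 acts exactly like -infinity).\<close>
definition deg' :: "complex poly \<Rightarrow> int" where
  "deg' q = (if q = 0 then -1 else int (degree q))"

definition poly_deg_le :: "complex fls \<Rightarrow> int \<Rightarrow> bool" where
  "poly_deg_le G b \<longleftrightarrow> (\<forall>j>0. fls_nth G j = 0) \<and> (\<forall>k::nat. int k > b \<longrightarrow> fls_nth G (- int k) = 0)"

end

theory Submission
  imports Defs
begin

lemma zpoly_nth: "fls_nth (zpoly q) j = (if j \<le> 0 then coeff q (nat (-j)) else 0)"
proof -
  have "fls_nth (zpoly q) j = (\<Sum>k\<le>degree q. coeff q k * (if j = - int k then 1 else 0))"
    unfolding zpoly_def fls_nth_sum by (intro sum.cong) auto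
  also have "\<dots> = (\<Sum>k\<le>degree q. if k = nat (-j) \<and> j \<le> 0 then coeff q k else 0)"
    by (intro sum.cong) auto
  also have "\<dots> = (if j \<le> 0 then coeff q (nat (-j)) else 0)"
    by (auto simp: sum.delta coeff_eq_0 not_le)
  finally show ?thesis .
qed

lemma zderiv_nth: "fls_nth (zderiv G) j = - (of_int (j - 1) * fls_nth G (j - 1))"
  unfolding zderiv_def by (simp add: fls_X_power_times_conv_shift)


lemma zpoly_eqI: "(\<And>j. fls_nth F j = fls_nth G j) \<Longrightarrow> F = G"
  by (rule fls_eqI) auto

lemma zpoly_0 [simp]: "zpoly 0 = 0"
  by (rule fls_eqI) (simp add: zpoly_nth)

lemma zpoly_add [simp]: "zpoly (p + q) = zpoly p + zpoly q"
  by (rule fls_eqI) (simp add: zpoly_nth)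

lemma zpoly_diff [simp]: "zpoly (p - q) = zpoly p - zpoly q"
  by (rule fls_eqI) (simp add: zpoly_nth)

lemma zpoly_uminus [simp]: "zpoly (- p) = - zpoly p"
  by (rule fls_eqI) (simp add: zpoly_nth)

lemma zpoly_smult [simp]: "zpoly (Polynomial.smult c p) = fls_const c * zpoly p"
  by (rule fls_eqI) (simp add: zpoly_nth)

lemma zpoly_const [simp]: "zpoly [:c:] = fls_const c"
  by (rule fls_eqI) (auto simp add: zpoly_nth coeff_pCons split: nat.split)

lemma zpoly_pCons: "zpoly (pCons a q) = fls_const a + fls_X_inv * zpoly q"
proof (rule fls_eqI)
  fix j
  show "fls_nth (zpoly (pCons a q)) j = fls_nth (fls_const a + fls_X_inv * zpoly q) j"
    using fls_X_inv_times_conv_shift(1)[of "zpoly q"]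
    apply (simp add: zpoly_nth coeff_pCons split: nat.split)
    apply (auto simp: nat_eq_iff)
    done
qed

lemma zpoly_mult [simp]: "zpoly (p * q) = zpoly p * zpoly q"
proof (induction p rule: pCons_induct)
  case 0
  then show ?case by simp
next
  case (pCons a p)
  have "zpoly (pCons a p * q) = zpoly (Polynomial.smult a q + pCons 0 (p * q))"
    by simp
  also have "\<dots> = fls_const a * zpoly q + fls_X_inv * (zpoly p * zpoly q)"
    by (simp add: zpoly_pCons pCons.IH)
  also have "\<dots> = zpoly (pCons a p) * zpoly q"
    by (simp add: zpoly_pCons algebra_simps)
  finally show ?case .
qed

lemma zpoly_numeral [simp]: "zpoly (numeral w) = numeral w"
  by (simp add: numeral_poly)

lemma zpoly_1 [simp]: "zpoly 1 = 1"
  using zpoly_const[of 1] by (simp add: one_pCons)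

lemma zpoly_power [simp]: "zpoly (q ^ k) = zpoly q ^ k"
  by (induction k) auto

lemma zpoly_pderiv: "zderiv (zpoly q) = zpoly (pderiv q)"
proof (rule fls_eqI)
  fix j
  show "fls_nth (zderiv (zpoly q)) j = fls_nth (zpoly (pderiv q)) j"
  proof (cases "j \<le> 0")
    case True
    then have "nat (- (j - 1)) = Suc (nat (-j))" by auto
    with True show ?thesis
      by (simp add: zderiv_nth zpoly_nth coeff_pderiv of_nat_nat algebra_simps)
  next
    case False
    then show ?thesis by (auto simp add: zderiv_nth zpoly_nth)
  qed
qed

lemma zderiv_add [simp]: "zderiv (F + G) = zderiv F + zderiv G"
  by (simp add: zderiv_def algebra_simps)
lemma zderiv_diff [simp]: "zderiv (F - G) = zderiv F - zderiv G"
  by (simp add: zderiv_def algebra_simps)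
lemma zderiv_mult [simp]: "zderiv (F * G) = zderiv F * G + F * zderiv G"
  by (simp add: zderiv_def algebra_simps)


definition lv :: "complex fls \<Rightarrow> int \<Rightarrow> bool" where
  "lv G d \<longleftrightarrow> (\<forall>j<d. fls_nth G j = 0)"

lemma lv_mono: "lv G d \<Longrightarrow> e \<le> d \<Longrightarrow> lv G e"
  by (auto simp: lv_def)

lemma lv_below: "lv G d \<Longrightarrow> j < d \<Longrightarrow> fls_nth G j = 0"
  by (auto simp: lv_def)

lemma lv_add: "lv F d \<Longrightarrow> lv G d \<Longrightarrow> lv (F + G) d"
  by (auto simp: lv_def)
lemma lv_diff: "lv F d \<Longrightarrow> lv G d \<Longrightarrow> lv (F - G) d"
  by (auto simp: lv_def)
lemma lv_const: "lv (fls_const c) 0"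
  by (auto simp: lv_def)

lemma lv_sub: "F \<noteq> 0 \<Longrightarrow> lv F a \<Longrightarrow> a \<le> fls_subdegree F"
  by (auto simp: lv_def intro: fls_subdegree_geI)

lemma lv_mult: "lv F a \<Longrightarrow> lv G b \<Longrightarrow> c = a + b \<Longrightarrow> lv (F * G) c"
proof -
  assume F: "lv F a" and G: "lv G b" and c: "c = a + b"
  show ?thesis
  proof (cases "F = 0 \<or> G = 0")
    case True then show ?thesis by (auto simp: lv_def)
  next
    case False
    with F G have "a \<le> fls_subdegree F" "b \<le> fls_subdegree G" by (auto intro: lv_sub)
    then show ?thesis using c by (auto simp: lv_def intro!: fls_times_nth_eq0)
  qed
qed

lemma lv_mult_nth: "lv F a \<Longrightarrow> lv G b \<Longrightarrow> c = a + b \<Longrightarrow> fls_nth (F * G) c = fls_nth F a * fls_nth G b"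
proof -
  assume F: "lv F a" and G: "lv G b" and c: "c = a + b"
  show ?thesis
  proof (cases "F = 0 \<or> G = 0")
    case True then show ?thesis by auto
  next
    case False
    with F G have sF: "a \<le> fls_subdegree F" and sG: "b \<le> fls_subdegree G" by (auto intro: lv_sub)
    show ?thesis
    proof (cases "a = fls_subdegree F \<and> b = fls_subdegree G")
      case True then show ?thesis using c by simp
    next
      case False
      then have "a < fls_subdegree F \<or> b < fls_subdegree G" using sF sG by auto
      then have "fls_nth F a * fls_nth G b = 0" by auto
      moreover have "fls_nth (F * G) c = 0" using c sF sG False
        by (intro fls_times_nth_eq0) auto
      ultimately show ?thesis by simp
    qed
  qed
qed

lemma lv_zderiv: "lv G d \<Longrightarrow> lv (zderiv G) (d + 1)"
  by (auto simp: lv_def zderiv_nth)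

lemma lv_zderiv_nth: "fls_nth (zderiv G) (d + 1) = - (of_int d * fls_nth G d)"
  by (simp add: zderiv_nth)

lemma lv_zpoly: "deg' q \<le> b \<Longrightarrow> lv (zpoly q) (- b)"
  by (auto simp: lv_def zpoly_nth deg'_def coeff_eq_0 split: if_splits)

lemma zpoly_nth_nat: "fls_nth (zpoly q) (- int k) = coeff q k"
  by (simp add: zpoly_nth)

lemma zpoly_pos: "j > 0 \<Longrightarrow> fls_nth (zpoly q) j = 0"
  by (simp add: zpoly_nth)

lemma poly_deg_leI: "lv (zpoly R) (- b) \<Longrightarrow> poly_deg_le (zpoly R) b"
  by (auto simp: poly_deg_le_def zpoly_pos lv_def)

lemma momL_bound: "degree q \<le> N \<Longrightarrow> momL \<mu> q = (\<Sum>k\<le>N. coeff q k * \<mu> k)"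
  unfolding momL_def by (intro sum.mono_neutral_left) (auto simp: coeff_eq_0)

lemma momL_add: "momL \<mu> (p + q) = momL \<mu> p + momL \<mu> q"
proof -
  let ?N = "max (degree p) (degree q)"
  have "degree (p + q) \<le> ?N" by (rule degree_add_le) auto
  then show ?thesis
    by (simp add: momL_bound[of _ ?N] sum.distrib algebra_simps)
qed

lemma momL_smult: "momL \<mu> (Polynomial.smult c p) = c * momL \<mu> p"
  using momL_bound[of "Polynomial.smult c p" "degree p"]
  by (simp add: momL_def sum_distrib_left algebra_simps)

lemma momL_diff: "momL \<mu> (p - q) = momL \<mu> p - momL \<mu> q"
  using momL_add[of \<mu> "p - q" q] by simp

lemma momL_0 [simp]: "momL \<mu> 0 = 0"
  by (simp add: momL_def)

lemma momL_monom: "momL \<mu> (monom c i) = c * \<mu> i"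
proof -
  have "momL \<mu> (monom c i) = (\<Sum>k\<le>i. (if i = k then c else 0) * \<mu> k)"
    using momL_bound[of "monom c i" i \<mu>] by (simp add: coeff_monom degree_monom_le)
  also have "\<dots> = (\<Sum>k\<le>i. if i = k then c * \<mu> k else 0)" by (intro sum.cong) auto
  finally show ?thesis by simp
qed

lemma ms_nth: "fls_nth (moment_series \<mu>) (int i + 1) = \<mu> i"
  by (simp add: moment_series_def)

lemma fP_nth: "fls_nth (moment_series \<mu> * zpoly q) (int i + 1) = momL \<mu> (monom 1 i * q)"
proof (induction q arbitrary: i rule: pCons_induct)
  case 0
  then show ?case by simp
next
  case (pCons a q)
  have e: "monom 1 i * pCons a q = monom a i + monom 1 (Suc i) * q"
    by (rule poly_eqI) (auto simp: coeff_monom_mult coeff_pCons coeff_monom split: nat.split)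
  have "moment_series \<mu> * zpoly (pCons a q) = fls_const a * moment_series \<mu> + fls_X_inv * (moment_series \<mu> * zpoly q)"
    by (simp add: zpoly_pCons algebra_simps)
  then have "fls_nth (moment_series \<mu> * zpoly (pCons a q)) (int i + 1)
     = a * \<mu> i + fls_nth (moment_series \<mu> * zpoly q) (int (Suc i) + 1)"
    using ms_nth[of \<mu> i] by (simp add: fls_X_inv_times_conv_shift add.commute add.left_commute)
  also have "\<dots> = a * \<mu> i + momL \<mu> (monom 1 (Suc i) * q)"
    using pCons.IH[of "Suc i"] by simp
  also have "\<dots> = momL \<mu> (monom 1 i * pCons a q)"
    by (simp only: e momL_add momL_monom)
  finally show ?case .
qed

lemma polypart_rem_nth:
  "fls_nth (G - zpoly (zpolypart G)) j = (if 0 < j then fls_nth G j else 0)"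
proof -
  have c: "coeff (zpolypart G) k = fls_nth G (- int k)" for k
  proof -
    have "coeff (zpolypart G) k = (\<Sum>i\<le>nat (- fls_subdegree G). if i = k then fls_nth G (- int i) else 0)"
      unfolding zpolypart_def coeff_sum by (intro sum.cong) (auto simp: coeff_monom)
    also have "\<dots> = fls_nth G (- int k)"
      by (auto simp: sum.delta)
    finally show ?thesis .
  qed
  show ?thesis by (simp add: zpoly_nth c)
qed


lemma deg_drop: "degree r \<le> d \<Longrightarrow> coeff r d = 0 \<Longrightarrow> r \<noteq> 0 \<Longrightarrow> degree r < d"
  by (metis le_neq_implies_less leading_coeff_0_iff)

lemma p_nz:
  assumes p_orth: "\<And>k l. momL \<mu> (p k * p l) = (if k = l then 1 else 0)"
  shows "p k \<noteq> 0"
  using p_orth[of k k] by auto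

lemma ortho:
  assumes p_deg: "\<And>k. degree (p k) = k"
    and p_orth: "\<And>k l. momL \<mu> (p k * p l) = (if k = l then 1 else 0)"
  shows "degree q < k \<Longrightarrow> momL \<mu> (q * p k) = 0"
proof (induction "degree q" arbitrary: q rule: less_induct)
  case less
  show ?case
  proof (cases "q = 0")
    case True then show ?thesis by simp
  next
    case False
    define d where "d = degree q"
    define c where "c = lead_coeff q / lead_coeff (p d)"
    define q' where "q' = q - Polynomial.smult c (p d)"
    have pd: "p d \<noteq> 0" using p_nz[OF p_orth] .
    have lc: "lead_coeff (p d) \<noteq> 0" using pd by (metis leading_coeff_0_iff)
    have q: "q = q' + Polynomial.smult c (p d)" by (simp add: q'_def)
    have "momL \<mu> (q * p k) = momL \<mu> (q' * p k) + c * momL \<mu> (p d * p k)"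
      by (subst q) (simp add: distrib_right momL_add momL_smult)
    also have "momL \<mu> (p d * p k) = 0" using p_orth[of d k] less.prems d_def by simp
    also have "momL \<mu> (q' * p k) = 0"
    proof (cases "q' = 0")
      case True then show ?thesis by simp
    next
      case False
      have "degree q' \<le> d" unfolding q'_def
        by (metis d_def degree_diff_le degree_smult_le le_refl p_deg)
      moreover have "coeff q' d = 0"
      proof -
        have "coeff (p d) d = lead_coeff (p d)" using p_deg[of d] by simp
        then show ?thesis using lc by (simp add: q'_def c_def d_def)
      qed
      ultimately have "degree q' < degree q" using deg_drop False d_def by blast
      then show ?thesis using less.hyps less.prems by simp
    qed
    finally show ?thesis by simp
  qed
qed

lemma lead_L:
  assumes p_deg: "\<And>k. degree (p k) = k"
    and p_orth: "\<And>k l. momL \<mu> (p k * p l) = (if k = l then 1 else 0)"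
  shows "momL \<mu> (monom 1 k * p k) = 1 / lead_coeff (p k)"
proof -
  define g where "g = lead_coeff (p k)"
  have g: "g \<noteq> 0" using p_nz[OF p_orth, of k] unfolding g_def by (metis leading_coeff_0_iff)
  define r where "r = p k - monom g k"
  have pk: "p k = Polynomial.smult g (monom 1 k) + r" by (simp add: r_def smult_monom)
  have r0: "momL \<mu> (r * p k) = 0"
  proof (cases "r = 0")
    case True then show ?thesis by simp
  next
    case False
    have "degree r \<le> k" unfolding r_def
      by (metis degree_diff_le degree_monom_le le_refl p_deg)
    moreover have "coeff r k = 0" using p_deg[of k] by (simp add: r_def g_def)
    ultimately have "degree r < k" using deg_drop False by blast
    then show ?thesis using ortho[OF p_deg p_orth] by blast
  qed
  have "1 = momL \<mu> (p k * p k)" using p_orth[of k k] by simp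
  also have "\<dots> = g * momL \<mu> (monom 1 k * p k) + momL \<mu> (r * p k)"
    by (subst (1) pk) (simp add: distrib_right momL_add momL_smult)
  finally show ?thesis using r0 g by (simp add: g_def field_simps)
qed


lemma eps_nth_pos: "fls_nth (epsn \<mu> q) (int i + 1) = momL \<mu> (monom 1 i * q)"
  unfolding epsn_def polypart_rem_nth by (simp add: fP_nth)

lemma eps_nth_nonpos: "j \<le> 0 \<Longrightarrow> fls_nth (epsn \<mu> q) j = 0"
  unfolding epsn_def polypart_rem_nth by simp

lemma eps_lv:
  assumes p_deg: "\<And>k. degree (p k) = k"
    and p_orth: "\<And>k l. momL \<mu> (p k * p l) = (if k = l then 1 else 0)"
  shows "lv (epsn \<mu> (p k)) (int k + 1)"
    and "fls_nth (epsn \<mu> (p k)) (int k + 1) = 1 / lead_coeff (p k)"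
proof -
  show "lv (epsn \<mu> (p k)) (int k + 1)"
    unfolding lv_def
  proof (intro allI impI)
    fix j :: int assume j: "j < int k + 1"
    show "fls_nth (epsn \<mu> (p k)) j = 0"
    proof (cases "j \<le> 0")
      case True then show ?thesis by (simp add: eps_nth_nonpos)
    next
      case False
      define i where "i = nat (j - 1)"
      have i: "j = int i + 1" using False by (simp add: i_def)
      with j have "i < k" by simp
      then show ?thesis using i eps_nth_pos ortho[OF p_deg p_orth, of "monom 1 i" k]
        by (simp add: degree_monom_eq)
    qed
  qed
  show "fls_nth (epsn \<mu> (p k)) (int k + 1) = 1 / lead_coeff (p k)"
    using eps_nth_pos lead_L[OF p_deg p_orth] by simp
qed

lemma lin_prod:
  fixes x :: "nat \<Rightarrow> complex"
  assumes "finite A"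
  shows "degree (\<Prod>j\<in>A. [:- x j, 1:]) = card A" "coeff (\<Prod>j\<in>A. [:- x j, 1:]) (card A) = 1"
proof -
  show d: "degree (\<Prod>j\<in>A. [:- x j, 1:]) = card A"
    by (subst degree_prod_sum_eq) auto
  have "lead_coeff (\<Prod>j\<in>A. [:- x j, 1:]) = 1" by (simp add: lead_coeff_prod)
  then show "coeff (\<Prod>j\<in>A. [:- x j, 1:]) (card A) = 1" using d by simp
qed

lemma theta_id:
  fixes w v u f fd P dP Q dQ :: "'a::comm_ring_1"
  assumes "w * fd = 2 * v * f + u"
  shows "w * ((f*P - Q) * dP - (fd*P + f*dP - dQ) * P) + 2 * v * (f*P - Q) * P
       = w*(dQ*P - dP*Q) - 2*v*Q*P - u*P^2"
proof -
  from assms have u: "u = w*fd - 2*v*f" by (simp add: algebra_simps)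
  show ?thesis unfolding u by (simp add: algebra_simps power2_eq_square)
qed

lemma omega_id:
  fixes w v u f fd Pn Pk dPn Qn Qk dQn c :: "'a::comm_ring_1"
  assumes "w * fd = 2 * v * f + u"
  shows "c * w * ((f*Pk - Qk) * dPn - (fd*Pn + f*dPn - dQn) * Pk) + c * v * ((f*Pk - Qk) * Pn + (f*Pn - Qn) * Pk)
       = c * (w*(dQn*Pk - Qk*dPn) - u*Pn*Pk - v*(Qk*Pn + Qn*Pk))"
proof -
  from assms have u: "u = w*fd - 2*v*f" by (simp add: algebra_simps)
  show ?thesis unfolding u by (simp add: algebra_simps)
qed

theorem mainTheorem1:
  fixes \<mu> :: "nat \<Rightarrow> complex" and p :: "nat \<Rightarrow> complex poly"
    and W V U :: "complex poly" and n :: nat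
  assumes hankel_nz: "\<And>k. det (hankel \<mu> k) \<noteq> 0"
    and p_deg: "\<And>k. degree (p k) = k"
    and p_orth: "\<And>k l. momL \<mu> (p k * p l) = (if k = l then 1 else 0)"
    and W_nz: "W \<noteq> 0"
    and pearson: "zpoly W * zderiv (moment_series \<mu>)
                    = 2 * zpoly V * moment_series \<mu> + zpoly U"
    and n_pos: "n \<ge> 1"
  defines "a \<equiv> \<lambda>k. lead_coeff (p (k - 1)) / lead_coeff (p k)"
    and "\<epsilon> \<equiv> \<lambda>k. epsn \<mu> (p k)"
    and "P \<equiv> \<lambda>k. zpoly (p k)"
    and "Q \<equiv> \<lambda>k. zpolypart (moment_series \<mu> * zpoly (p k))"
  defines "\<Theta> \<equiv> zpoly W * (\<epsilon> n * zpoly (pderiv (p n)) - zderiv (\<epsilon> n) * P n)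
                 + 2 * zpoly V * \<epsilon> n * P n"
    and "\<Omega> \<equiv> fls_const (a n) * zpoly W * (\<epsilon> (n-1) * zpoly (pderiv (p n)) - zderiv (\<epsilon> n) * P (n-1))
                 + fls_const (a n) * zpoly V * (\<epsilon> (n-1) * P n + \<epsilon> n * P (n-1))"
  shows "poly_deg_le \<Theta> (max (deg' W - 2) (deg' V - 1))
    \<and> poly_deg_le \<Omega> (max (deg' W - 1) (deg' V))
    \<and> \<Theta> = zpoly (W * (pderiv (Q n) * p n - pderiv (p n) * Q n)
                     - 2 * V * Q n * p n - U * (p n)^2)
    \<and> (\<forall>(m::nat) (x::nat \<Rightarrow> complex) (\<alpha>::nat \<Rightarrow> complex).
           m \<ge> 2 \<longrightarrow> W = (\<Prod>k<m. [:- x k, 1:]) \<longrightarrow>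
           Polynomial.smult 2 V = (\<Sum>k<m. Polynomial.smult (\<alpha> k) (\<Prod>j\<in>{..<m} - {k}. [:- x j, 1:])) \<longrightarrow>
           fls_nth \<Theta> (2 - int m) = of_nat (2*n+1) + (\<Sum>k<m. \<alpha> k)
           \<and> (\<forall>k::nat. k > m - 2 \<longrightarrow> fls_nth \<Theta> (- int k) = 0)
           \<and> fls_nth \<Omega> (1 - int m) = of_nat n + (\<Sum>k<m. \<alpha> k) / 2
           \<and> (\<forall>k::nat. k > m - 1 \<longrightarrow> fls_nth \<Omega> (- int k) = 0))"
  proof -
  obtain k where nk: "n = Suc k" using n_pos by (cases n) auto
  define f where "f = moment_series \<mu>"
  define \<gamma> where "\<gamma> = (\<lambda>i. lead_coeff (p i))"
  have \<gamma>nz: "\<gamma> i \<noteq> 0" for i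
    using p_nz[OF p_orth, of i] unfolding \<gamma>_def by (metis leading_coeff_0_iff)
  have eps_eq: "\<epsilon> i = f * P i - zpoly (Q i)" for i
    by (simp add: \<epsilon>_def epsn_def Q_def P_def f_def)
  have lvE: "lv (\<epsilon> i) (int i + 1)" for i
    unfolding \<epsilon>_def by (rule eps_lv(1)[OF p_deg p_orth])
  have nthE: "fls_nth (\<epsilon> i) (int i + 1) = 1 / \<gamma> i" for i
    unfolding \<epsilon>_def \<gamma>_def by (rule eps_lv(2)[OF p_deg p_orth])
  have degp: "deg' (p i) = int i" for i
    using p_nz[OF p_orth, of i] p_deg[of i] by (simp add: deg'_def)
  have lvP: "lv (P i) (- int i)" for i
    unfolding P_def by (rule lv_zpoly) (simp add: degp)
  have nthP: "fls_nth (P i) (- int i) = \<gamma> i" for i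
    unfolding P_def \<gamma>_def using p_deg[of i] by (simp add: zpoly_nth_nat)
  have dP: "zpoly (pderiv (p i)) = zderiv (P i)" for i
    by (simp add: P_def zpoly_pderiv)
  have lvdP: "lv (zderiv (P i)) (1 - int i)" for i
    using lv_zderiv[OF lvP[of i]] by simp
  have nthdP: "fls_nth (zderiv (P i)) (1 - int i) = of_nat i * \<gamma> i" for i
    using lv_zderiv_nth[of "P i" "- int i"] nthP[of i] by simp
  have lvdE: "lv (zderiv (\<epsilon> i)) (int i + 2)" for i
    using lv_zderiv[OF lvE[of i]] by (simp add: add.assoc)
  have nthdE: "fls_nth (zderiv (\<epsilon> i)) (int i + 2) = - (of_int (int i + 1) / \<gamma> i)" for i
    using lv_zderiv_nth[of "\<epsilon> i" "int i + 1"] nthE[of i] by (simp add: add.commute add.left_commute)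
  define A where "A = \<epsilon> n * zderiv (P n) - zderiv (\<epsilon> n) * P n"
  define B where "B = \<epsilon> n * P n"
  have lvA1: "lv (\<epsilon> n * zderiv (P n)) 2" by (rule lv_mult[OF lvE lvdP]) simp
  have lvA2: "lv (zderiv (\<epsilon> n) * P n) 2" by (rule lv_mult[OF lvdE lvP]) simp
  have nA1: "fls_nth (\<epsilon> n * zderiv (P n)) 2 = of_nat n"
    using \<gamma>nz[of n] by (subst lv_mult_nth[OF lvE lvdP]) (auto simp: nthE nthdP)
  have nA2: "fls_nth (zderiv (\<epsilon> n) * P n) 2 = - (of_nat n + 1)"
    using \<gamma>nz[of n] by (subst lv_mult_nth[OF lvdE lvP]) (auto simp: nthdE nthP)
  have lvA: "lv A 2" unfolding A_def by (rule lv_diff[OF lvA1 lvA2])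
  have nA: "fls_nth A 2 = of_nat (2 * n + 1)"
    unfolding A_def using nA1 nA2 by simp
  have lvB: "lv B 1" unfolding B_def by (rule lv_mult[OF lvE lvP]) simp
  have nB: "fls_nth B 1 = 1"
    unfolding B_def using \<gamma>nz[of n] by (subst lv_mult_nth[OF lvE lvP]) (auto simp: nthE nthP)
  have Th_eq: "\<Theta> = zpoly W * A + zpoly (Polynomial.smult 2 V) * B"
    unfolding \<Theta>_def A_def B_def by (simp add: dP mult.assoc)
  have dE: "zderiv (\<epsilon> i) = zderiv f * P i + f * zderiv (P i) - zpoly (pderiv (Q i))" for i
    by (simp add: eps_eq zpoly_pderiv)
  have pear: "zpoly W * zderiv f = 2 * zpoly V * f + zpoly U"
    using pearson by (simp add: f_def)
  have Th_poly: "\<Theta> = zpoly (W * (pderiv (Q n) * p n - pderiv (p n) * Q n)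
                     - 2 * V * Q n * p n - U * (p n)^2)"
  proof -
    have "\<Theta> = zpoly W * ((f * P n - zpoly (Q n)) * zderiv (P n) - (zderiv f * P n + f * zderiv (P n) - zpoly (pderiv (Q n))) * P n)
        + 2 * zpoly V * (f * P n - zpoly (Q n)) * P n"
      unfolding \<Theta>_def dP unfolding dE unfolding eps_eq ..
    also have "\<dots> = zpoly W * (zpoly (pderiv (Q n)) * P n - zderiv (P n) * zpoly (Q n))
        - 2 * zpoly V * zpoly (Q n) * P n - zpoly U * (P n)^2"
      by (rule theta_id[OF pear])
    also have "\<dots> = zpoly (W * (pderiv (Q n) * p n - pderiv (p n) * Q n)
                     - 2 * V * Q n * p n - U * (p n)^2)"
      by (simp add: P_def zpoly_pderiv)
    finally show ?thesis .
  qed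
  have nk1: "n - 1 = k" using nk by simp
  have an: "a n = \<gamma> k / \<gamma> n" by (simp add: a_def \<gamma>_def nk)
  define C where "C = \<epsilon> k * zderiv (P n) - zderiv (\<epsilon> n) * P k"
  define D where "D = \<epsilon> k * P n + \<epsilon> n * P k"
  have Om_eq: "\<Omega> = (fls_const (a n) * zpoly W) * C + (fls_const (a n) * zpoly V) * D"
    unfolding \<Omega>_def C_def D_def nk1 by (simp add: dP mult.assoc)
  have Om_poly: "\<Omega> = zpoly (Polynomial.smult (a n) (W * (pderiv (Q n) * p k - Q k * pderiv (p n))
       - U * p n * p k - V * (Q k * p n + Q n * p k)))"
  proof -
    have "\<Omega> = fls_const (a n) * zpoly W * ((f * P k - zpoly (Q k)) * zderiv (P n)
          - (zderiv f * P n + f * zderiv (P n) - zpoly (pderiv (Q n))) * P k)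
        + fls_const (a n) * zpoly V * ((f * P k - zpoly (Q k)) * P n + (f * P n - zpoly (Q n)) * P k)"
      unfolding \<Omega>_def nk1 dP unfolding dE unfolding eps_eq ..
    also have "\<dots> = fls_const (a n) * (zpoly W * (zpoly (pderiv (Q n)) * P k - zpoly (Q k) * zderiv (P n))
        - zpoly U * P n * P k - zpoly V * (zpoly (Q k) * P n + zpoly (Q n) * P k))"
      by (rule omega_id[OF pear])
    also have "\<dots> = zpoly (Polynomial.smult (a n) (W * (pderiv (Q n) * p k - Q k * pderiv (p n))
       - U * p n * p k - V * (Q k * p n + Q n * p k)))"
      by (simp add: P_def zpoly_pderiv)
    finally show ?thesis .
  qed
  have lvC1: "lv (\<epsilon> k * zderiv (P n)) 1" by (rule lv_mult[OF lvE lvdP]) (simp add: nk)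
  have lvC2': "lv (zderiv (\<epsilon> n) * P k) 3" by (rule lv_mult[OF lvdE lvP]) (simp add: nk)
  have lvC2: "lv (zderiv (\<epsilon> n) * P k) 1" by (rule lv_mono[OF lvC2']) simp
  have nthdPn: "fls_nth (zderiv (P (Suc k))) (- int k) = of_nat (Suc k) * \<gamma> (Suc k)"
    using nthdP[of "Suc k"] by simp
  have nC1: "fls_nth (\<epsilon> k * zderiv (P n)) 1 = of_nat n * \<gamma> n / \<gamma> k"
    using \<gamma>nz[of k] by (subst lv_mult_nth[OF lvE lvdP]) (auto simp: nthE nthdPn nk)
  have nC2: "fls_nth (zderiv (\<epsilon> n) * P k) 1 = 0" by (rule lv_below[OF lvC2']) simp
  have lvC: "lv C 1" unfolding C_def by (rule lv_diff[OF lvC1 lvC2])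
  have nC: "fls_nth C 1 = of_nat n * \<gamma> n / \<gamma> k" unfolding C_def using nC1 nC2 by simp
  have lvD1: "lv (\<epsilon> k * P n) 0" by (rule lv_mult[OF lvE lvP]) (simp add: nk)
  have lvD2': "lv (\<epsilon> n * P k) 2" by (rule lv_mult[OF lvE lvP]) (simp add: nk)
  have lvD2: "lv (\<epsilon> n * P k) 0" by (rule lv_mono[OF lvD2']) simp
  have nD1: "fls_nth (\<epsilon> k * P n) 0 = \<gamma> n / \<gamma> k"
    using nthP[of "Suc k"] by (subst lv_mult_nth[OF lvE lvP]) (auto simp: nthE nk)
  have nD2: "fls_nth (\<epsilon> n * P k) 0 = 0" by (rule lv_below[OF lvD2']) simp
  have lvD: "lv D 0" unfolding D_def by (rule lv_add[OF lvD1 lvD2])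
  have nD: "fls_nth D 0 = \<gamma> n / \<gamma> k" unfolding D_def using nD1 nD2 by simp
  have degS: "deg' (Polynomial.smult 2 V) = deg' V" by (simp add: deg'_def)
  have lvW: "lv (zpoly W) (- deg' W)" by (rule lv_zpoly) simp
  have lvV: "lv (zpoly V) (- deg' V)" by (rule lv_zpoly) simp
  have lvS: "lv (zpoly (Polynomial.smult 2 V)) (- deg' V)" by (rule lv_zpoly) (simp add: degS)
  have lvaW: "lv (fls_const (a n) * zpoly W) (- deg' W)" by (rule lv_mult[OF lv_const lvW]) simp
  have lvaV: "lv (fls_const (a n) * zpoly V) (- deg' V)" by (rule lv_mult[OF lv_const lvV]) simp
  have g1: "lv \<Theta> (- max (deg' W - 2) (deg' V - 1))"
    unfolding Th_eq
    by (rule lv_add; rule lv_mono, rule lv_mult[OF lvW lvA refl] lv_mult[OF lvS lvB refl], simp)+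
  have g2: "lv \<Omega> (- max (deg' W - 1) (deg' V))"
    unfolding Om_eq
    by (rule lv_add; rule lv_mono, rule lv_mult[OF lvaW lvC refl] lv_mult[OF lvaV lvD refl], simp)+
  have part1: "poly_deg_le \<Theta> (max (deg' W - 2) (deg' V - 1))"
    using g1 unfolding Th_poly by (rule poly_deg_leI)
  have part2: "poly_deg_le \<Omega> (max (deg' W - 1) (deg' V))"
    using g2 unfolding Om_poly by (rule poly_deg_leI)
  show ?thesis
  proof (intro conjI[OF part1] conjI[OF part2] conjI[OF Th_poly] allI impI, intro conjI)
    fix m :: nat and x \<alpha> :: "nat \<Rightarrow> complex"
    assume m2: "m \<ge> 2" and Wd: "W = (\<Prod>k<m. [:- x k, 1:])"
      and Vd: "Polynomial.smult 2 V = (\<Sum>k<m. Polynomial.smult (\<alpha> k) (\<Prod>j\<in>{..<m} - {k}. [:- x j, 1:]))"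
    define S where "S = Polynomial.smult 2 V"
    have Wdeg: "degree W = m" using lin_prod(1)[of "{..<m}" x] Wd by simp
    have Wc: "coeff W m = 1" using lin_prod(2)[of "{..<m}" x] Wd by simp
    have degW': "deg' W = int m" using Wdeg W_nz by (simp add: deg'_def)
    have cardk: "card ({..<m} - {k}) = m - 1" if "k < m" for k
      using that by simp
    have Sdeg: "degree S \<le> m - 1"
      unfolding S_def Vd
    proof (rule degree_sum_le)
      fix k assume "k \<in> {..<m}"
      then have k: "k < m" by simp
      have "degree (Polynomial.smult (\<alpha> k) (\<Prod>j\<in>{..<m} - {k}. [:- x j, 1:]))
          \<le> degree (\<Prod>j\<in>{..<m} - {k}. [:- x j, 1:])" by (rule degree_smult_le)
      also have "\<dots> = card ({..<m} - {k})" by (rule lin_prod(1)) simp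
      also have "\<dots> = m - 1" by (rule cardk[OF k])
      finally show "degree (Polynomial.smult (\<alpha> k) (\<Prod>j\<in>{..<m} - {k}. [:- x j, 1:])) \<le> m - 1" .
    qed simp
    have Sc: "coeff S (m - 1) = (\<Sum>k<m. \<alpha> k)"
      unfolding S_def Vd coeff_sum
    proof (rule sum.cong)
      fix k assume "k \<in> {..<m}"
      then have k: "k < m" by simp
      have "coeff (\<Prod>j\<in>{..<m} - {k}. [:- x j, 1:]) (m - 1) = 1"
        using lin_prod(2)[of "{..<m} - {k}" x] unfolding cardk[OF k] by simp
      then show "coeff (Polynomial.smult (\<alpha> k) (\<Prod>j\<in>{..<m} - {k}. [:- x j, 1:])) (m - 1) = \<alpha> k"
        by simp
    qed simp
    have d1: "deg' S \<le> int (degree S)" by (simp add: deg'_def)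
    have d2: "int (degree S) \<le> int (m - 1)" using Sdeg by simp
    have d3: "int (m - 1) = int m - 1" using m2 by simp
    have degS': "deg' S \<le> int m - 1" using d1 d2 d3 by linarith
    have dSV: "deg' S = deg' V" unfolding S_def deg'_def by simp
    have degV': "deg' V \<le> int m - 1" using degS' dSV by simp
    have lvW': "lv (zpoly W) (- int m)" by (rule lv_zpoly) (simp add: degW')
    have nW: "fls_nth (zpoly W) (- int m) = 1" unfolding zpoly_nth_nat by (rule Wc)
    have lvS': "lv (zpoly S) (1 - int m)" using lv_zpoly[OF degS'] by simp
    have im: "1 - int m = - int (m - 1)" using m2 by simp
    have nS: "fls_nth (zpoly S) (1 - int m) = (\<Sum>k<m. \<alpha> k)"
      unfolding im zpoly_nth_nat by (rule Sc)
    have lvV'': "lv (zpoly V) (1 - int m)" using lv_zpoly[OF degV'] by simp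
    have nV: "fls_nth (zpoly V) (1 - int m) = (\<Sum>k<m. \<alpha> k) / 2"
      using Sc unfolding im zpoly_nth_nat by (simp add: S_def mult.commute)
    have Th1: "fls_nth (zpoly W * A) (2 - int m) = of_nat (2 * n + 1)"
      by (subst lv_mult_nth[OF lvW' lvA]) (auto simp: nW nA)
    have Th2: "fls_nth (zpoly S * B) (2 - int m) = (\<Sum>k<m. \<alpha> k)"
      by (subst lv_mult_nth[OF lvS' lvB]) (auto simp: nS nB)
    have lvTh: "lv \<Theta> (2 - int m)"
      unfolding Th_eq S_def[symmetric]
      by (rule lv_add[OF lv_mult[OF lvW' lvA] lv_mult[OF lvS' lvB]]) simp_all
    show "fls_nth \<Theta> (2 - int m) = of_nat (2*n+1) + (\<Sum>k<m. \<alpha> k)"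
      unfolding Th_eq S_def[symmetric] using Th1 Th2 by simp
    show "\<forall>k::nat. k > m - 2 \<longrightarrow> fls_nth \<Theta> (- int k) = 0"
    proof (intro allI impI)
      fix k :: nat assume "k > m - 2"
      then have "- int k < 2 - int m" using m2 by linarith
      then show "fls_nth \<Theta> (- int k) = 0" by (rule lv_below[OF lvTh])
    qed
    have lvaW': "lv (fls_const (a n) * zpoly W) (- int m)" by (rule lv_mult[OF lv_const lvW']) simp
    have naW: "fls_nth (fls_const (a n) * zpoly W) (- int m) = a n" by (simp add: nW)
    have lvaV': "lv (fls_const (a n) * zpoly V) (1 - int m)" by (rule lv_mult[OF lv_const lvV'']) simp
    have naV: "fls_nth (fls_const (a n) * zpoly V) (1 - int m) = a n * ((\<Sum>k<m. \<alpha> k) / 2)" by (simp add: nV)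
    have Om1: "fls_nth ((fls_const (a n) * zpoly W) * C) (1 - int m) = of_nat n"
      using \<gamma>nz[of k] \<gamma>nz[of n]
      by (subst lv_mult_nth[OF lvaW' lvC]) (auto simp: naW nW nC an)
    have Om2: "fls_nth ((fls_const (a n) * zpoly V) * D) (1 - int m) = (\<Sum>k<m. \<alpha> k) / 2"
      using \<gamma>nz[of k] \<gamma>nz[of n]
      by (subst lv_mult_nth[OF lvaV' lvD]) (auto simp: naV nV nD an)
    have lvOm: "lv \<Omega> (1 - int m)"
      unfolding Om_eq
      by (rule lv_add[OF lv_mult[OF lvaW' lvC] lv_mult[OF lvaV' lvD]]) simp_all
    show "fls_nth \<Omega> (1 - int m) = of_nat n + (\<Sum>k<m. \<alpha> k) / 2"
      unfolding Om_eq using Om1 Om2 by simp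
    show "\<forall>k::nat. k > m - 1 \<longrightarrow> fls_nth \<Omega> (- int k) = 0"
    proof (intro allI impI)
      fix k :: nat assume "k > m - 1"
      then have "- int k < 1 - int m" using m2 by linarith
      then show "fls_nth \<Omega> (- int k) = 0" by (rule lv_below[OF lvOm])
    qed
  qed
qed

end
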